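(* Let $q>p-1$ with $p>1$, $\sigma_j^2\asymp j^{-q}$, and let $Y_1$ be a $\mathcal{Y}$-valued random variable with $\mathbb{E}Y_1=\hat y=K\hat x$ and $\mathbb{E}(Y_1-\hat y,u_j)^2\asymp j^{-p}$. Let $0<\varepsilon<p-1$ and let $S$ be the (unbounded) linear operator $S\big(\sum_j\alpha_ju_j\big):=\sum_jd_j\alpha_ju_j$ with $d_j:=j^{\frac{p-1-\varepsilon}{2}}$, on the domain $\{\sum_j\alpha_ju_j:\sum_j\alpha_j^2d_j^2<\infty\}$. Then $SK:\mathcal{X}\to\mathcal{Y}$ is compact with singular values $d_j\sigma_j\asymp j^{-\frac{q+1+\varepsilon-p}{2}}$ and the same singular vectors $(v_j),(u_j)$; $\mathbb{E}\|SY_1-S\hat y\|^2<\infty$; and if $\hat x\in\mathcal{X}_{\nu,\rho}$ then, with $\nu':=\frac{q}{q+1+\varepsilon-p}\nu>\nu$, there is a constant $c>0$ (independent of $\hat x$ and $\rho$) such that $\hat x=((SK)^*SK)^{\nu'/2}\xi'$ for some $\xi'$ with $\|\xi'\|\le c\rho$.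
   Context: $K:\mathcal{X}\to\mathcal{Y}$ is a compact linear operator between infinite-dimensional real separable Hilbert spaces with dense range and singular value decomposition $(\sigma_j,u_j,v_j)_{j\in\mathbb{N}}$: $(u_j)$ orthonormal basis of $\mathcal{Y}$, $(v_j)$ orthonormal basis of $\mathcal{N}(K)^\perp$, $\sigma_j>0$ nonincreasing to $0$, $Kv_j=\sigma_ju_j$. For $\nu,\rho>0$, $\mathcal{X}_{\nu,\rho}:=\{(K^*K)^{\nu/2}\xi:\|\xi\|\le\rho\}=\{\sum_j\sigma_j^\nu(\xi,v_j)v_j:\|\xi\|\le\rho\}$. $a_j\asymp b_j$ means two-sided bounds with constants independent of $j$. *)

theory Defs
  imports "HOL-Analysis.Analysis" "HOL-Probability.Probability"
begin

definition asymp_equiv2 :: "(nat \<Rightarrow> real) \<Rightarrow> (nat \<Rightarrow> real) \<Rightarrow> bool" where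
  "asymp_equiv2 a b \<longleftrightarrow> (\<exists>c1 c2. c1 > 0 \<and> c2 > 0 \<and> (\<forall>j. c1 * b j \<le> a j \<and> a j \<le> c2 * b j))"

definition compact_operator :: "('a::real_normed_vector \<Rightarrow> 'b::real_normed_vector) \<Rightarrow> bool" where
  "compact_operator T \<longleftrightarrow> bounded_linear T \<and> compact (closure (T ` cball 0 1))"

definition orthonormal_seq :: "(nat \<Rightarrow> 'a::real_inner) \<Rightarrow> bool" where
  "orthonormal_seq e \<longleftrightarrow> (\<forall>i j. e i \<bullet> e j = (if i = j then 1 else 0))"

definition orthonormal_basis_of :: "(nat \<Rightarrow> 'a::real_inner) \<Rightarrow> 'a set \<Rightarrow> bool" where
  "orthonormal_basis_of e V \<longleftrightarrow> orthonormal_seq e \<and> closure (span (range e)) = V"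

definition null_perp :: "('a::real_inner \<Rightarrow> 'b::real_inner) \<Rightarrow> 'a set" where
  "null_perp K = {x. \<forall>z. K z = 0 \<longrightarrow> x \<bullet> z = 0}"

definition source_set :: "(nat \<Rightarrow> real) \<Rightarrow> (nat \<Rightarrow> 'a::real_inner) \<Rightarrow> real \<Rightarrow> real \<Rightarrow> 'a set" where
  "source_set s v \<nu> \<rho> =
     {x. \<exists>\<xi>. norm \<xi> \<le> \<rho> \<and> x = (\<Sum>j. (s j powr \<nu> * (\<xi> \<bullet> v j)) *\<^sub>R v j)}"

definition diag_dom :: "(nat \<Rightarrow> real) \<Rightarrow> (nat \<Rightarrow> 'a::real_inner) \<Rightarrow> 'a set" where
  "diag_dom d u = {y. summable (\<lambda>j. (d j * (y \<bullet> u j))\<^sup>2)}"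

definition diag_op :: "(nat \<Rightarrow> real) \<Rightarrow> (nat \<Rightarrow> 'a::real_inner) \<Rightarrow> 'a \<Rightarrow> 'a" where
  "diag_op d u y = (\<Sum>j. (d j * (y \<bullet> u j)) *\<^sub>R u j)"

end

theory Submission
  imports Defs
begin

lemma on_inner_sum:
  assumes "orthonormal_seq e" "finite A"
  shows "(\<Sum>j\<in>A. a j *\<^sub>R e j) \<bullet> e i = (if i \<in> A then a i else 0)"
proof -
  have "(\<Sum>j\<in>A. a j *\<^sub>R e j) \<bullet> e i = (\<Sum>j\<in>A. a j * (if j = i then 1 else 0))"
    using assms(1) unfolding orthonormal_seq_def by (simp add: inner_sum_left)
  also have "\<dots> = (if i \<in> A then a i else 0)"
    using assms(2) by (simp add: sum.delta' if_distrib cong: if_cong)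
  finally show ?thesis .
qed

lemma on_norm_sum:
  assumes "orthonormal_seq e" "finite A"
  shows "(norm (\<Sum>j\<in>A. a j *\<^sub>R e j))\<^sup>2 = (\<Sum>j\<in>A. (a j)\<^sup>2)"
proof -
  have "(norm (\<Sum>j\<in>A. a j *\<^sub>R e j))\<^sup>2 = (\<Sum>j\<in>A. a j *\<^sub>R e j) \<bullet> (\<Sum>i\<in>A. a i *\<^sub>R e i)"
    by (simp add: power2_norm_eq_inner)
  also have "\<dots> = (\<Sum>i\<in>A. a i * ((\<Sum>j\<in>A. a j *\<^sub>R e j) \<bullet> e i))"
    by (simp add: inner_sum_right)
  also have "\<dots> = (\<Sum>i\<in>A. (a i)\<^sup>2)"
    using on_inner_sum[OF assms] by (simp add: power2_eq_square)
  finally show ?thesis .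
qed

lemma bessel_partial:
  assumes "orthonormal_seq e"
  shows "(\<Sum>j<n. (x \<bullet> e j)\<^sup>2) \<le> (norm x)\<^sup>2"
proof -
  define s where "s = (\<Sum>j<n. (x \<bullet> e j) *\<^sub>R e j)"
  have xs: "x \<bullet> s = (\<Sum>j<n. (x \<bullet> e j)\<^sup>2)"
    unfolding s_def by (simp add: inner_sum_right power2_eq_square)
  have ss: "s \<bullet> s = (\<Sum>j<n. (x \<bullet> e j)\<^sup>2)"
    using on_norm_sum[OF assms, of "{..<n}" "\<lambda>j. x \<bullet> e j"] unfolding s_def
    by (simp add: power2_norm_eq_inner)
  have "0 \<le> (x - s) \<bullet> (x - s)" by simp
  also have "\<dots> = x \<bullet> x - 2 * (x \<bullet> s) + s \<bullet> s"
    by (simp add: inner_diff_left inner_diff_right inner_commute)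
  finally show ?thesis using xs ss by (simp add: power2_norm_eq_inner)
qed

lemma bessel:
  assumes "orthonormal_seq e"
  shows "summable (\<lambda>j. (x \<bullet> e j)\<^sup>2)" "(\<Sum>j. (x \<bullet> e j)\<^sup>2) \<le> (norm x)\<^sup>2"
proof -
  show s: "summable (\<lambda>j. (x \<bullet> e j)\<^sup>2)"
    by (rule summableI_nonneg_bounded[OF _ bessel_partial[OF assms]]) simp
  show "(\<Sum>j. (x \<bullet> e j)\<^sup>2) \<le> (norm x)\<^sup>2"
    by (rule suminf_le_const[OF s bessel_partial[OF assms]])
qed

lemma on_series:
  fixes e :: "nat \<Rightarrow> 'a::{real_inner,complete_space}"
  assumes e: "orthonormal_seq e" and a: "summable (\<lambda>j. (a j)\<^sup>2)"
  shows "summable (\<lambda>j. a j *\<^sub>R e j)"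
    and "(\<Sum>j. a j *\<^sub>R e j) \<bullet> e i = a i"
    and "(norm (\<Sum>j. a j *\<^sub>R e j))\<^sup>2 = (\<Sum>j. (a j)\<^sup>2)"
proof -
  define S where "S n = (\<Sum>j<n. a j *\<^sub>R e j)" for n
  have dist: "dist (S m) (S n) < r" if "m \<ge> N" "n \<ge> N" "\<And>m n. m \<ge> N \<Longrightarrow> norm (\<Sum>j=m..<n. (a j)\<^sup>2) < r\<^sup>2" "r > 0"
    for m n N r
  proof -
    have *: "dist (S m) (S n) < r" if "m \<le> n" "m \<ge> N" for m n
    proof -
      have "S n - S m = (\<Sum>j=m..<n. a j *\<^sub>R e j)"
        unfolding S_def using that(1)
        by (metis atLeast0LessThan sum_diff_nat_ivl zero_le)
      hence "(dist (S m) (S n))\<^sup>2 = (\<Sum>j=m..<n. (a j)\<^sup>2)"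
        using on_norm_sum[OF e, of "{m..<n}" a] dist_commute[of "S m" "S n"] by (simp add: dist_norm)
      also have "\<dots> < r\<^sup>2" using \<open>\<And>m n. m \<ge> N \<Longrightarrow> norm (\<Sum>j=m..<n. (a j)\<^sup>2) < r\<^sup>2\<close>[OF that(2), of n]
        by simp
      finally show ?thesis using \<open>r > 0\<close>
        by (meson power_less_imp_less_base less_imp_le)
    qed
    show ?thesis
    proof (cases "m \<le> n")
      case True then show ?thesis using * that by auto
    next
      case False then show ?thesis using *[of n m] that by (simp add: dist_commute)
    qed
  qed
  have "Cauchy S"
  proof (rule metric_CauchyI)
    fix r :: real assume "r > 0"
    then have "r\<^sup>2 > 0" by simp
    then obtain N where N: "\<And>m n. m \<ge> N \<Longrightarrow> norm (\<Sum>j=m..<n. (a j)\<^sup>2) < r\<^sup>2"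
      using a[unfolded summable_Cauchy] by blast
    show "\<exists>N. \<forall>m\<ge>N. \<forall>n\<ge>N. dist (S m) (S n) < r"
      using dist[OF _ _ N \<open>r > 0\<close>] by blast
  qed
  then have "convergent S" by (rule Cauchy_convergent)
  then show sm: "summable (\<lambda>j. a j *\<^sub>R e j)"
    unfolding summable_iff_convergent S_def .
  then have lim: "S \<longlonglongrightarrow> (\<Sum>j. a j *\<^sub>R e j)"
    unfolding S_def by (simp add: summable_LIMSEQ)
  have l1: "(\<lambda>n. S n \<bullet> e i) \<longlonglongrightarrow> (\<Sum>j. a j *\<^sub>R e j) \<bullet> e i"
    by (intro tendsto_intros lim)
  have ev: "eventually (\<lambda>n. S n \<bullet> e i = a i) sequentially"
    using eventually_gt_at_top[of i]
    by eventually_elim (simp add: S_def on_inner_sum[OF e])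
  have "((\<lambda>n. a i) \<longlonglongrightarrow> (\<Sum>j. a j *\<^sub>R e j) \<bullet> e i)"
    by (rule tendsto_cong[THEN iffD1, OF ev l1])
  then show "(\<Sum>j. a j *\<^sub>R e j) \<bullet> e i = a i"
    by (simp add: LIMSEQ_const_iff)
  have l2: "(\<lambda>n. (norm (S n))\<^sup>2) \<longlonglongrightarrow> (norm (\<Sum>j. a j *\<^sub>R e j))\<^sup>2"
    by (intro tendsto_intros lim)
  have eq: "(\<lambda>n. (norm (S n))\<^sup>2) = (\<lambda>n. \<Sum>j<n. (a j)\<^sup>2)"
    unfolding S_def using on_norm_sum[OF e] by auto
  show "(norm (\<Sum>j. a j *\<^sub>R e j))\<^sup>2 = (\<Sum>j. (a j)\<^sup>2)"
    using LIMSEQ_unique[OF l2[unfolded eq] summable_LIMSEQ[OF a]] .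
qed

lemma parallelogram:
  fixes a b :: "'a::real_inner"
  shows "(norm (a - b))\<^sup>2 + (norm (a + b))\<^sup>2 = 2 * (norm a)\<^sup>2 + 2 * (norm b)\<^sup>2"
  by (simp add: power2_norm_eq_inner inner_diff_left inner_diff_right inner_add_left inner_add_right inner_commute)

lemma projection_mem:
  fixes N :: "'a::{real_inner,complete_space} set"
  assumes cl: "closed N" and sub: "subspace N"
    and w: "\<And>z. (\<forall>n\<in>N. z \<bullet> n = 0) \<Longrightarrow> w \<bullet> z = 0"
  shows "w \<in> N"
proof -
  define D where "D = (\<lambda>n. (norm (w - n))\<^sup>2) ` N"
  define \<delta> where "\<delta> = Inf D"
  have N0: "0 \<in> N" using sub by (simp add: subspace_0)
  have Dne: "D \<noteq> {}" using N0 D_def by auto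
  have Dbdd: "bdd_below D" unfolding D_def by (rule bdd_belowI[of _ 0]) auto
  have low: "\<delta> \<le> (norm (w - n))\<^sup>2" if "n \<in> N" for n
    unfolding \<delta>_def using that Dbdd by (auto simp: D_def intro!: cInf_lower)
  have "\<exists>n\<in>N. (norm (w - n))\<^sup>2 < \<delta> + 1 / (real k + 1)" for k
  proof -
    have "\<exists>y\<in>D. y < \<delta> + 1 / (real k + 1)"
      unfolding \<delta>_def using Dne by (intro cInf_lessD) auto
    then show ?thesis by (auto simp: D_def)
  qed
  then obtain m where m: "\<And>k. m k \<in> N" "\<And>k. (norm (w - m k))\<^sup>2 < \<delta> + 1 / (real k + 1)"
    by metis
  have cd: "(norm (m k - m l))\<^sup>2 \<le> 2 / (real k + 1) + 2 / (real l + 1)" for k l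
  proof -
    have mid: "(1/2) *\<^sub>R (m k + m l) \<in> N"
      using m(1) sub by (intro subspace_mul subspace_add) auto
    have "(norm ((w - m k) + (w - m l)))\<^sup>2 = 4 * (norm (w - (1/2) *\<^sub>R (m k + m l)))\<^sup>2"
    proof -
      have "(w - m k) + (w - m l) = 2 *\<^sub>R (w - (1/2) *\<^sub>R (m k + m l))"
        by (simp add: algebra_simps scaleR_2)
      then show ?thesis by (simp add: power_mult_distrib)
    qed
    moreover have "(norm ((w - m k) - (w - m l)))\<^sup>2 = (norm (m k - m l))\<^sup>2"
      by (simp add: norm_minus_commute)
    moreover note parallelogram[of "w - m k" "w - m l"] low[OF mid] m(2)[of k] m(2)[of l]
    ultimately show ?thesis by linarith
  qed
  have "Cauchy m"
  proof (rule metric_CauchyI)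
    fix r :: real assume r: "r > 0"
    obtain M :: nat where M: "real M > 4 / r\<^sup>2" using reals_Archimedean2 by blast
    show "\<exists>M. \<forall>k\<ge>M. \<forall>l\<ge>M. dist (m k) (m l) < r"
    proof (intro exI allI impI)
      fix k l assume kl: "k \<ge> M" "l \<ge> M"
      have r2: "r\<^sup>2 > 0" using r by simp
      have "2 / (real k + 1) < r\<^sup>2 / 2"
      proof -
        have "4 / r\<^sup>2 < real k + 1" using M kl by linarith
        then have "4 < (real k + 1) * r\<^sup>2" using r2 by (simp add: field_simps)
        then show ?thesis by (simp add: field_simps)
      qed
      moreover have "2 / (real l + 1) < r\<^sup>2 / 2"
      proof -
        have "4 / r\<^sup>2 < real l + 1" using M kl by linarith
        then have "4 < (real l + 1) * r\<^sup>2" using r2 by (simp add: field_simps)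
        then show ?thesis by (simp add: field_simps)
      qed
      ultimately have "(dist (m k) (m l))\<^sup>2 < r\<^sup>2" using cd[of k l] by (simp add: dist_norm)
      then show "dist (m k) (m l) < r" using r by (meson power_less_imp_less_base less_imp_le)
    qed
  qed
  then obtain n0 where lim: "m \<longlonglongrightarrow> n0" using Cauchy_convergent convergent_def by blast
  have n0N: "n0 \<in> N" using closed_sequentially[OF cl m(1) lim] .
  have "(norm (w - n0))\<^sup>2 \<le> \<delta>"
  proof (rule LIMSEQ_le)
    show "(\<lambda>k. (norm (w - m k))\<^sup>2) \<longlonglongrightarrow> (norm (w - n0))\<^sup>2" by (intro tendsto_intros lim)
    show "(\<lambda>k. \<delta> + 1 / (real k + 1)) \<longlonglongrightarrow> \<delta>"
      using tendsto_add[OF tendsto_const LIMSEQ_inverse_real_of_nat] by (simp add: inverse_eq_divide add.commute)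
    show "\<exists>N. \<forall>k\<ge>N. (norm (w - m k))\<^sup>2 \<le> \<delta> + 1 / (real k + 1)"
      using m(2) less_imp_le by blast
  qed
  then have minim: "(norm (w - n0))\<^sup>2 \<le> (norm (w - n))\<^sup>2" if "n \<in> N" for n
    using low[OF that] by linarith
  define r where "r = w - n0"
  have orth: "r \<bullet> n = 0" if "n \<in> N" for n
  proof -
    define s where "s = r \<bullet> n"
    define A where "A = n \<bullet> n"
    have A0: "A \<ge> 0" unfolding A_def by simp
    define t where "t = s / (A + 1)"
    have "n0 + t *\<^sub>R n \<in> N" using sub n0N that by (intro subspace_add subspace_mul) auto
    from minim[OF this] have "r \<bullet> r \<le> (r - t *\<^sub>R n) \<bullet> (r - t *\<^sub>R n)"
      by (simp add: r_def power2_norm_eq_inner algebra_simps)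
    then have "0 \<le> - 2 * t * s + t * t * A"
      by (simp add: inner_diff_left inner_diff_right inner_commute s_def A_def algebra_simps)
    then have "0 \<le> (- 2 * t * s + t * t * A) * (A + 1)\<^sup>2" using A0 by simp
    also have "\<dots> = - s * s * (A + 2)"
    proof -
      have ta: "t * (A + 1) = s" unfolding t_def using A0 by simp
      have "(- 2 * t * s + t * t * A) * (A + 1)\<^sup>2 = - 2 * s * (t * (A + 1)) * (A + 1) + (t * (A + 1)) * (t * (A + 1)) * A"
        by (simp add: algebra_simps power2_eq_square)
      also have "\<dots> = - 2 * s * s * (A + 1) + s * s * A" by (simp only: ta)
      finally show ?thesis by (simp add: algebra_simps)
    qed
    finally have "0 \<le> - (s * s) * (A + 2)" by simp
    then have "(s * s) * (A + 2) \<le> 0" by (simp only: mult_minus_left)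
    then have "s * s \<le> 0" using A0 by (simp add: mult_le_0_iff)
    then have "s * s = 0" using zero_le_square[of s] by linarith
    then show ?thesis unfolding s_def by simp
  qed
  have "w \<bullet> r = 0" using w orth by blast
  moreover have "n0 \<bullet> r = 0" using orth[OF n0N] by (simp add: inner_commute)
  ultimately have "r \<bullet> r = 0" unfolding r_def by (simp add: inner_diff_left)
  then have "r = 0" by simp
  then show ?thesis using n0N r_def by simp
qed

lemma key_coeff:
  fixes K :: "'x::{real_inner, complete_space} \<Rightarrow> 'y::real_inner"
  assumes bl: "bounded_linear K"
    and v_onb: "orthonormal_basis_of v (null_perp K)"
    and u_on: "orthonormal_seq u"
    and svd: "\<And>j. K (v j) = \<sigma> j *\<^sub>R u j"
  shows "K x \<bullet> u j = \<sigma> j * (x \<bullet> v j)"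
proof -
  have von: "orthonormal_seq v" and vcl: "closure (span (range v)) = null_perp K"
    using v_onb unfolding orthonormal_basis_of_def by auto
  define a where "a i = x \<bullet> v i" for i
  have asum: "summable (\<lambda>i. (a i)\<^sup>2)" unfolding a_def by (rule bessel[OF von])
  define P where "P = (\<Sum>i. a i *\<^sub>R v i)"
  have Psum: "summable (\<lambda>i. a i *\<^sub>R v i)" using on_series(1)[OF von asum] .
  have Pv: "P \<bullet> v i = a i" for i unfolding P_def using on_series(2)[OF von asum] .
  define w where "w = x - P"
  have wv: "w \<bullet> v i = 0" for i unfolding w_def by (simp add: inner_diff_left Pv a_def)
  have wspan: "w \<bullet> z = 0" if "z \<in> span (range v)" for z
    using orthogonal_to_span[OF that, of w] wv unfolding orthogonal_def by auto
  have wcl: "w \<bullet> z = 0" if "z \<in> closure (span (range v))" for z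
  proof -
    have "closed {z. w \<bullet> z = 0}"
      by (intro closed_Collect_eq continuous_intros)
    moreover have "span (range v) \<subseteq> {z. w \<bullet> z = 0}" using wspan by auto
    ultimately have "closure (span (range v)) \<subseteq> {z. w \<bullet> z = 0}" by (rule closure_minimal[rotated])
    then show ?thesis using that by auto
  qed
  have "w \<in> {z. K z = 0}"
  proof (rule projection_mem)
    show "closed {z. K z = 0}"
      using bl by (intro closed_Collect_eq continuous_intros) (auto simp: bounded_linear.continuous_on linear_continuous_on)
    show "subspace {z. K z = 0}" using bl bounded_linear.linear linear_subspace_kernel by blast
    fix z assume "\<forall>n\<in>{z. K z = 0}. z \<bullet> n = 0"
    then have "z \<in> null_perp K" unfolding null_perp_def by auto
    then show "w \<bullet> z = 0" using wcl vcl by auto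
  qed
  then have Kx: "K x = K P" unfolding w_def using bl
    by (simp add: linear_diff bounded_linear.linear)
  have "(\<lambda>i. K (a i *\<^sub>R v i)) sums K P"
    using bounded_linear.sums[OF bl] Psum P_def summable_sums by blast
  then have "(\<lambda>i. K (a i *\<^sub>R v i) \<bullet> u j) sums (K P \<bullet> u j)"
    using bounded_linear.sums[OF bounded_linear_inner_left] by blast
  moreover have "(\<lambda>i. K (a i *\<^sub>R v i) \<bullet> u j) = (\<lambda>i. if i = j then a j * \<sigma> j else 0)"
  proof
    fix i
    have "K (a i *\<^sub>R v i) = (a i * \<sigma> i) *\<^sub>R u i"
      using bl svd by (simp add: bounded_linear.linear linear_scale)
    then show "K (a i *\<^sub>R v i) \<bullet> u j = (if i = j then a j * \<sigma> j else 0)"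
      using u_on unfolding orthonormal_seq_def by auto
  qed
  ultimately have "K P \<bullet> u j = a j * \<sigma> j"
    using sums_single[of j "\<lambda>_. a j * \<sigma> j"] sums_unique2 by (metis (no_types, lifting))
  then show ?thesis using Kx a_def by simp
qed

lemma head_compact:
  fixes u :: "nat \<Rightarrow> 'y::real_normed_vector"
  shows "compact {(\<Sum>j<N. (c j * t j) *\<^sub>R u j) | t. \<forall>j. \<bar>t j\<bar> \<le> 1}"
proof (induction N)
  case 0
  have "{(\<Sum>j<0. (c j * t j) *\<^sub>R u j) | t. \<forall>j. \<bar>t j\<bar> \<le> (1::real)} = {0}"
    by (auto intro!: exI[of _ "\<lambda>_. 0"])
  then show ?case by simp
next
  case (Suc N)
  define A where "A = {(\<Sum>j<N. (c j * t j) *\<^sub>R u j) | t. \<forall>j. \<bar>t j\<bar> \<le> (1::real)}"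
  define B where "B = (\<lambda>s. (c N * s) *\<^sub>R u N) ` {-1..1::real}"
  have cB: "compact B" unfolding B_def by (intro compact_continuous_image continuous_intros) auto
  have eq: "{(\<Sum>j<Suc N. (c j * t j) *\<^sub>R u j) | t. \<forall>j. \<bar>t j\<bar> \<le> 1} = {x + y | x y. x \<in> A \<and> y \<in> B}"
  proof (intro equalityI subsetI)
    fix z assume "z \<in> {(\<Sum>j<Suc N. (c j * t j) *\<^sub>R u j) | t. \<forall>j. \<bar>t j\<bar> \<le> 1}"
    then obtain t where t: "\<forall>j. \<bar>t j\<bar> \<le> 1" "z = (\<Sum>j<Suc N. (c j * t j) *\<^sub>R u j)" by auto
    have "(\<Sum>j<N. (c j * t j) *\<^sub>R u j) \<in> A" unfolding A_def using t by auto
    moreover have "(c N * t N) *\<^sub>R u N \<in> B" unfolding B_def using t(1)[rule_format, of N] by (auto simp: abs_le_iff intro!: image_eqI[where x="t N"])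
    ultimately show "z \<in> {x + y | x y. x \<in> A \<and> y \<in> B}" using t(2) by auto
  next
    fix z assume "z \<in> {x + y | x y. x \<in> A \<and> y \<in> B}"
    then obtain t s where t: "\<forall>j. \<bar>t j\<bar> \<le> 1" "s \<in> {-1..1}"
      "z = (\<Sum>j<N. (c j * t j) *\<^sub>R u j) + (c N * s) *\<^sub>R u N"
      unfolding A_def B_def by auto
    define t' where "t' = t(N := s)"
    have P1: "\<forall>j. \<bar>t' j\<bar> \<le> 1" using t unfolding t'_def by auto
    have P2: "z = (\<Sum>j<Suc N. (c j * t' j) *\<^sub>R u j)"
      using t(3) unfolding t'_def by (auto intro!: sum.cong)
    show "z \<in> {(\<Sum>j<Suc N. (c j * t j) *\<^sub>R u j) | t. \<forall>j. \<bar>t j\<bar> \<le> 1}"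
      by (intro CollectI exI[of _ t'] conjI P1 P2)
  qed
  show ?case unfolding eq using compact_sums[OF Suc.IH[folded A_def] cB] .
qed

lemma compact_diag:
  fixes u :: "nat \<Rightarrow> 'y::{real_inner,complete_space}" and v :: "nat \<Rightarrow> 'x::real_inner"
  assumes uon: "orthonormal_seq u" and von: "orthonormal_seq v"
    and B: "\<And>j. \<bar>c j\<bar> \<le> B" and c0: "c \<longlonglongrightarrow> 0"
    and T: "\<And>x. T x = (\<Sum>j. (c j * (x \<bullet> v j)) *\<^sub>R u j)"
  shows "compact_operator T"
proof -
  have B0: "B \<ge> 0" using B[of 0] by linarith
  have sq: "summable (\<lambda>j. (c j * (x \<bullet> v j))\<^sup>2)" and sqle: "(\<Sum>j. (c j * (x \<bullet> v j))\<^sup>2) \<le> B\<^sup>2 * (norm x)\<^sup>2" for x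
  proof -
    have le: "(c j * (x \<bullet> v j))\<^sup>2 \<le> B\<^sup>2 * (x \<bullet> v j)\<^sup>2" for j
    proof -
      have "(c j)\<^sup>2 \<le> B\<^sup>2" using power_mono[OF B[of j], of 2] by simp
      then show ?thesis by (simp add: power_mult_distrib mult_right_mono)
    qed
    show s: "summable (\<lambda>j. (c j * (x \<bullet> v j))\<^sup>2)"
      by (rule summable_comparison_test[OF _ summable_mult[OF bessel(1)[OF von]]]) (use le in auto)
    have "(\<Sum>j. (c j * (x \<bullet> v j))\<^sup>2) \<le> (\<Sum>j. B\<^sup>2 * (x \<bullet> v j)\<^sup>2)"
      by (rule suminf_le[OF le s summable_mult[OF bessel(1)[OF von]]])
    also have "\<dots> = B\<^sup>2 * (\<Sum>j. (x \<bullet> v j)\<^sup>2)" by (rule suminf_mult[OF bessel(1)[OF von]])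
    also have "\<dots> \<le> B\<^sup>2 * (norm x)\<^sup>2" by (rule mult_left_mono[OF bessel(2)[OF von]]) simp
    finally show "(\<Sum>j. (c j * (x \<bullet> v j))\<^sup>2) \<le> B\<^sup>2 * (norm x)\<^sup>2" .
  qed
  note ss = on_series[OF uon sq]
  have bl: "bounded_linear T"
  proof (rule bounded_linear_intro)
    fix x y
    have "T (x + y) = (\<Sum>j. (c j * (x \<bullet> v j)) *\<^sub>R u j + (c j * (y \<bullet> v j)) *\<^sub>R u j)"
      unfolding T by (simp add: inner_add_left algebra_simps)
    also have "\<dots> = T x + T y" unfolding T by (rule suminf_add[symmetric, OF ss(1) ss(1)])
    finally show "T (x + y) = T x + T y" .
  next
    fix r x
    have "T (r *\<^sub>R x) = (\<Sum>j. r *\<^sub>R ((c j * (x \<bullet> v j)) *\<^sub>R u j))"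
      unfolding T by (simp add: algebra_simps)
    also have "\<dots> = r *\<^sub>R T x" unfolding T by (rule suminf_scaleR_right[symmetric, OF ss(1)])
    finally show "T (r *\<^sub>R x) = r *\<^sub>R T x" .
  next
    fix x
    have "(norm (T x))\<^sup>2 \<le> (norm x * B)\<^sup>2" using ss(3)[of x] sqle[of x] T[of x]
      by (simp add: power_mult_distrib mult.commute)
    then show "norm (T x) \<le> norm x * B" using power2_le_imp_le B0 by simp
  qed
  have tb: "\<exists>k. finite k \<and> T ` cball 0 1 \<subseteq> (\<Union>z\<in>k. ball z e)" if e: "e > 0" for e
  proof -
    have e2: "e / 2 > 0" using e by simp
    have "\<exists>N. \<forall>j\<ge>N. \<bar>c j\<bar> < e / 2"
      using c0[unfolded LIMSEQ_iff, rule_format, OF e2] by simp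
    then obtain N where N: "\<And>j. j \<ge> N \<Longrightarrow> \<bar>c j\<bar> < e / 2" by blast
    define H where "H = {(\<Sum>j<N. (c j * t j) *\<^sub>R u j) | t. \<forall>j. \<bar>t j\<bar> \<le> 1}"
    have "compact H" unfolding H_def by (rule head_compact)
    then obtain k where k: "finite k" "H \<subseteq> (\<Union>z\<in>k. ball z (e/2))"
      unfolding compact_eq_totally_bounded using e2 by blast
    have "T x \<in> (\<Union>z\<in>k. ball z e)" if x: "norm x \<le> 1" for x
    proof -
      define a where "a j = c j * (x \<bullet> v j)" for j
      define b where "b j = (if j < N then 0 else a j)" for j
      define h where "h = (\<Sum>j<N. a j *\<^sub>R u j)"
      have "h \<in> H" unfolding H_def h_def a_def
      proof (intro CollectI exI conjI allI)
        fix j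
        have "\<bar>x \<bullet> v j\<bar> \<le> norm x * norm (v j)" by (rule Cauchy_Schwarz_ineq2)
        moreover have "norm (v j) = 1" using von unfolding orthonormal_seq_def
          by (simp add: norm_eq_sqrt_inner)
        ultimately show "\<bar>x \<bullet> v j\<bar> \<le> 1" using x by simp
      qed simp
      then obtain z where z: "z \<in> k" "dist z h < e/2" using k by auto
      have bsq: "summable (\<lambda>j. (b j)\<^sup>2)"
        by (rule summable_comparison_test[OF _ sq[of x]]) (auto simp: b_def a_def)
      have eqb: "(\<lambda>j. b j *\<^sub>R u j) = (\<lambda>j. a j *\<^sub>R u j - (if j < N then a j *\<^sub>R u j else 0))"
        by (auto simp: b_def)
      have sa: "summable (\<lambda>j. a j *\<^sub>R u j)" unfolding a_def by (rule ss(1))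
      have sfin: "summable (\<lambda>j. if j < N then a j *\<^sub>R u j else 0)"
        by (rule summable_finite[of "{..<N}"]) auto
      have hfin: "(\<Sum>j. if j < N then a j *\<^sub>R u j else 0) = h"
        unfolding h_def by (subst suminf_finite[of "{..<N}"]) auto
      have "(\<Sum>j. b j *\<^sub>R u j) = (\<Sum>j. a j *\<^sub>R u j - (if j < N then a j *\<^sub>R u j else 0))"
        by (simp only: eqb)
      also have "\<dots> = (\<Sum>j. a j *\<^sub>R u j) - (\<Sum>j. if j < N then a j *\<^sub>R u j else 0)"
        by (rule suminf_diff[symmetric, OF sa sfin])
      also have "\<dots> = T x - h" unfolding hfin by (simp add: T a_def)
      finally have "(\<Sum>j. b j *\<^sub>R u j) = T x - h" .
      then have "(norm (T x - h))\<^sup>2 = (\<Sum>j. (b j)\<^sup>2)" using on_series(3)[OF uon bsq] by simp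
      also have "\<dots> \<le> (\<Sum>j. (e/2)\<^sup>2 * (x \<bullet> v j)\<^sup>2)"
      proof (rule suminf_le[OF _ bsq summable_mult[OF bessel(1)[OF von]]])
        fix j
        show "(b j)\<^sup>2 \<le> (e/2)\<^sup>2 * (x \<bullet> v j)\<^sup>2"
        proof (cases "j < N")
          case False
          then have "\<bar>c j\<bar> \<le> e/2" using N[of j] by simp
          then have "(c j)\<^sup>2 \<le> (e/2)\<^sup>2" using power_mono[OF \<open>\<bar>c j\<bar> \<le> e/2\<close>, of 2] by simp
          then show ?thesis using False by (simp add: b_def a_def power_mult_distrib mult_right_mono)
        qed (simp add: b_def)
      qed
      also have "\<dots> = (e/2)\<^sup>2 * (\<Sum>j. (x \<bullet> v j)\<^sup>2)" by (rule suminf_mult[OF bessel(1)[OF von]])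
      also have "\<dots> \<le> (e/2)\<^sup>2 * 1"
      proof (rule mult_left_mono)
        have "(norm x)\<^sup>2 \<le> 1" using x by (simp add: power_le_one)
        then show "(\<Sum>j. (x \<bullet> v j)\<^sup>2) \<le> 1" using bessel(2)[OF von, of x] by linarith
      qed simp
      finally have n2: "(norm (T x - h))\<^sup>2 \<le> (e/2)\<^sup>2" by simp
      have n3: "norm (T x - h) \<le> e/2" using power2_le_imp_le[OF n2] e by simp
      have "dist h (T x) = norm (T x - h)" by (simp add: dist_norm norm_minus_commute)
      then have "dist z (T x) < e" using z(2) n3 dist_triangle[of z "T x" h] by linarith
      then show ?thesis using z by auto
    qed
    then show ?thesis using k(1) by auto
  qed
  have "compact (closure (T ` cball 0 1))"
    unfolding compact_eq_totally_bounded
  proof (intro conjI allI impI)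
    show "uniform_space_class.complete (closure (T ` cball 0 1))"
      by (rule complete_closed_subset[OF closed_closure subset_UNIV complete_UNIV])
    fix e :: real assume e: "e > 0"
    then obtain k where k: "finite k" "T ` cball 0 1 \<subseteq> (\<Union>z\<in>k. ball z (e/2))"
      using tb[of "e/2"] by auto
    have "closure (T ` cball 0 1) \<subseteq> (\<Union>z\<in>k. cball z (e/2))"
    proof (rule closure_minimal)
      have "(\<Union>z\<in>k. ball z (e/2)) \<subseteq> (\<Union>z\<in>k. cball z (e/2))" by (intro UN_mono) auto
      then show "T ` cball 0 1 \<subseteq> (\<Union>z\<in>k. cball z (e/2))" using k(2) by (rule order_trans[rotated])
      show "closed (\<Union>z\<in>k. cball z (e/2))" using k(1) by (intro closed_UN) auto
    qed
    also have "\<dots> \<subseteq> (\<Union>z\<in>k. ball z e)" using e by auto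
    finally show "\<exists>k. finite k \<and> closure (T ` cball 0 1) \<subseteq> (\<Union>z\<in>k. ball z e)" using k(1) by blast
  qed
  then show ?thesis unfolding compact_operator_def using bl by simp
qed

theorem mainTheorem9:
  fixes K :: "'x::{real_inner, complete_space} \<Rightarrow> 'y::{real_inner, complete_space, second_countable_topology}"
    and \<sigma> :: "nat \<Rightarrow> real" and u :: "nat \<Rightarrow> 'y" and v :: "nat \<Rightarrow> 'x"
    and p q \<epsilon> \<nu> :: real
    and M :: "'w measure" and Y1 :: "'w \<Rightarrow> 'y" and xhat :: 'x
  assumes K_compact: "compact_operator K"
    and K_dense: "closure (range K) = UNIV"
    and u_onb: "orthonormal_basis_of u UNIV"
    and v_onb: "orthonormal_basis_of v (null_perp K)"
    and \<sigma>_pos: "\<And>j. \<sigma> j > 0"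
    and \<sigma>_mono: "antimono \<sigma>"
    and \<sigma>_lim: "\<sigma> \<longlonglongrightarrow> 0"
    and svd: "\<And>j. K (v j) = \<sigma> j *\<^sub>R u j"
    and p_gt: "p > 1" and q_gt: "q > p - 1"
    and \<sigma>_asymp: "asymp_equiv2 (\<lambda>j. (\<sigma> j)\<^sup>2) (\<lambda>j. real (Suc j) powr (- q))"
    and prob: "prob_space M"
    and Y1_meas: "Y1 \<in> borel_measurable M"
    and Y1_int: "integrable M Y1"
    and Y1_mean: "(\<integral>\<omega>. Y1 \<omega> \<partial>M) = K xhat"
    and Y1_var: "asymp_equiv2 (\<lambda>j. \<integral>\<omega>. ((Y1 \<omega> - K xhat) \<bullet> u j)\<^sup>2 \<partial>M)
                              (\<lambda>j. real (Suc j) powr (- p))"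
    and \<epsilon>_pos: "0 < \<epsilon>" and \<epsilon>_lt: "\<epsilon> < p - 1"
    and \<nu>_pos: "\<nu> > 0"
  shows "let d = (\<lambda>j. real (Suc j) powr ((p - 1 - \<epsilon>) / 2));
             S = diag_op d u;
             \<nu>' = q / (q + 1 + \<epsilon> - p) * \<nu>
         in (\<forall>x. K x \<in> diag_dom d u)
          \<and> compact_operator (S \<circ> K)
          \<and> (\<forall>j. d j * \<sigma> j > 0 \<and> S (K (v j)) = (d j * \<sigma> j) *\<^sub>R u j)
          \<and> (\<forall>x. (\<forall>j. x \<bullet> v j = 0) \<longrightarrow> S (K x) = 0)
          \<and> asymp_equiv2 (\<lambda>j. d j * \<sigma> j) (\<lambda>j. real (Suc j) powr (- (q + 1 + \<epsilon> - p) / 2))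
          \<and> (AE \<omega> in M. Y1 \<omega> \<in> diag_dom d u)
          \<and> (\<integral>\<^sup>+\<omega>. ennreal ((norm (S (Y1 \<omega>) - S (K xhat)))\<^sup>2) \<partial>M) < \<infinity>
          \<and> \<nu>' > \<nu>
          \<and> (\<exists>c>0. \<forall>\<rho>>0. \<forall>x \<in> source_set \<sigma> v \<nu> \<rho>.
                 x \<in> source_set (\<lambda>j. d j * \<sigma> j) v \<nu>' (c * \<rho>))"
proof -
  obtain c1 c2 where c12: "c1 > 0" "c2 > 0"
    "\<And>j. c1 * real (Suc j) powr (- q) \<le> (\<sigma> j)\<^sup>2" "\<And>j. (\<sigma> j)\<^sup>2 \<le> c2 * real (Suc j) powr (- q)"
    using \<sigma>_asymp unfolding asymp_equiv2_def by blast
  define d where "d = (\<lambda>j. real (Suc j) powr ((p - 1 - \<epsilon>) / 2))"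
  define \<beta> where "\<beta> = q + 1 + \<epsilon> - p"
  have \<beta>pos: "\<beta> > 0" unfolding \<beta>_def using q_gt \<epsilon>_pos by simp
  define c where "c j = d j * \<sigma> j" for j
  have dpos: "d j > 0" for j unfolding d_def by simp
  have cpos: "c j > 0" for j unfolding c_def using dpos \<sigma>_pos by simp
  have sq_pow: "(real (Suc j) powr (a/2))\<^sup>2 = real (Suc j) powr a" for j a
    by (simp add: power2_eq_square powr_add[symmetric])
  have \<sigma>lo: "sqrt c1 * real (Suc j) powr (- q / 2) \<le> \<sigma> j" for j
  proof (rule power2_le_imp_le)
    show "(sqrt c1 * real (Suc j) powr (- q / 2))\<^sup>2 \<le> (\<sigma> j)\<^sup>2"
      using c12(1) c12(3)[of j] sq_pow[of j "-q"] by (simp add: power_mult_distrib)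
  qed (use \<sigma>_pos[of j] in simp)
  have \<sigma>hi: "\<sigma> j \<le> sqrt c2 * real (Suc j) powr (- q / 2)" for j
  proof (rule power2_le_imp_le)
    show "(\<sigma> j)\<^sup>2 \<le> (sqrt c2 * real (Suc j) powr (- q / 2))\<^sup>2"
      using c12(2) c12(4)[of j] sq_pow[of j "-q"] by (simp add: power_mult_distrib)
  qed (use c12(2) in simp)
  have dexp: "d j * real (Suc j) powr (- q / 2) = real (Suc j) powr (- \<beta> / 2)" for j
  proof -
    have ex: "(p - 1 - \<epsilon>) / 2 + - q / 2 = - \<beta> / 2" unfolding \<beta>_def by (simp add: field_simps)
    show ?thesis unfolding d_def using powr_add[of "real (Suc j)" "(p - 1 - \<epsilon>) / 2" "- q / 2"] ex by simp
  qed
  have clo: "sqrt c1 * real (Suc j) powr (- \<beta> / 2) \<le> c j" for j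
  proof -
    have "sqrt c1 * real (Suc j) powr (- \<beta> / 2) = d j * (sqrt c1 * real (Suc j) powr (- q / 2))"
      using dexp[of j] by (simp add: algebra_simps)
    also have "\<dots> \<le> d j * \<sigma> j" using \<sigma>lo[of j] dpos[of j] by simp
    finally show ?thesis unfolding c_def .
  qed
  have chi: "c j \<le> sqrt c2 * real (Suc j) powr (- \<beta> / 2)" for j
  proof -
    have "c j \<le> d j * (sqrt c2 * real (Suc j) powr (- q / 2))"
      unfolding c_def using \<sigma>hi[of j] dpos[of j] by simp
    also have "\<dots> = sqrt c2 * real (Suc j) powr (- \<beta> / 2)"
      using dexp[of j] by (simp add: algebra_simps)
    finally show ?thesis .
  qed
  have cB: "\<bar>c j\<bar> \<le> sqrt c2" for j
  proof -
    have "real (Suc j) powr (- \<beta> / 2) \<le> 1" using powr_mono[of "- \<beta> / 2" 0 "real (Suc j)"] \<beta>pos by simp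
    then have "sqrt c2 * real (Suc j) powr (- \<beta> / 2) \<le> sqrt c2 * 1"
      using c12(2) by (intro mult_left_mono) auto
    then show ?thesis using chi[of j] cpos[of j] by simp
  qed
  have c0: "c \<longlonglongrightarrow> 0"
  proof (rule tendsto_sandwich[of "\<lambda>_. 0" _ _ "\<lambda>j. sqrt c2 * real (Suc j) powr (- \<beta> / 2)"])
    show "\<forall>\<^sub>F j in sequentially. 0 \<le> c j" using cpos less_imp_le by (intro always_eventually) blast
    show "\<forall>\<^sub>F j in sequentially. c j \<le> sqrt c2 * real (Suc j) powr (- \<beta> / 2)" using chi by (intro always_eventually) blast
    have "filterlim (\<lambda>j. real (Suc j)) at_top sequentially"
      by (rule filterlim_compose[OF filterlim_real_sequentially filterlim_Suc])
    then have "(\<lambda>j. real (Suc j) powr (- \<beta> / 2)) \<longlonglongrightarrow> 0"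
      by (rule tendsto_neg_powr[rotated]) (use \<beta>pos in simp)
    then show "(\<lambda>j. sqrt c2 * real (Suc j) powr (- \<beta> / 2)) \<longlonglongrightarrow> 0"
      using tendsto_mult_right_zero by blast
  qed simp
  have uon: "orthonormal_seq u" using u_onb orthonormal_basis_of_def by blast
  have von: "orthonormal_seq v" using v_onb orthonormal_basis_of_def by blast
  have blK: "bounded_linear K" using K_compact compact_operator_def by blast
  have key: "K x \<bullet> u j = \<sigma> j * (x \<bullet> v j)" for x j
    by (rule key_coeff[OF blK v_onb uon svd])
  have dK: "d j * (K x \<bullet> u j) = c j * (x \<bullet> v j)" for x j
    using key[of x j] by (simp add: c_def)
  have SK: "diag_op d u (K x) = (\<Sum>j. (c j * (x \<bullet> v j)) *\<^sub>R u j)" for x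
    unfolding diag_op_def dK ..
  have csq: "summable (\<lambda>j. (c j * (x \<bullet> v j))\<^sup>2)" for x
  proof (rule summable_comparison_test[OF _ summable_mult[OF bessel(1)[OF von, of x], of c2]])
    show "\<exists>N. \<forall>n\<ge>N. norm ((c n * (x \<bullet> v n))\<^sup>2) \<le> c2 * (x \<bullet> v n)\<^sup>2"
    proof (intro exI allI impI)
      fix n
      have "(c n)\<^sup>2 \<le> (sqrt c2)\<^sup>2" using power_mono[OF cB[of n], of 2] by simp
      then have "(c n)\<^sup>2 \<le> c2" using c12(2) by simp
      then show "norm ((c n * (x \<bullet> v n))\<^sup>2) \<le> c2 * (x \<bullet> v n)\<^sup>2"
        by (simp add: power_mult_distrib mult_right_mono)
    qed
  qed
  have C1: "\<forall>x. K x \<in> diag_dom d u"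
    unfolding diag_dom_def using csq dK by simp
  have C2: "compact_operator (diag_op d u \<circ> K)"
    by (rule compact_diag[OF uon von cB c0]) (simp add: SK)
  have C3: "\<forall>j. d j * \<sigma> j > 0 \<and> diag_op d u (K (v j)) = (d j * \<sigma> j) *\<^sub>R u j"
  proof (intro allI conjI)
    fix j
    show "d j * \<sigma> j > 0" using cpos c_def by simp
    have "(\<lambda>i. (c i * (v j \<bullet> v i)) *\<^sub>R u i) = (\<lambda>i. if i = j then c j *\<^sub>R u j else 0)"
      using von unfolding orthonormal_seq_def by auto
    then have "diag_op d u (K (v j)) = c j *\<^sub>R u j"
      unfolding SK using sums_unique[OF sums_single[of j "\<lambda>_. c j *\<^sub>R u j"]] by simp
    then show "diag_op d u (K (v j)) = (d j * \<sigma> j) *\<^sub>R u j" by (simp add: c_def)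
  qed
  have C4: "\<forall>x. (\<forall>j. x \<bullet> v j = 0) \<longrightarrow> diag_op d u (K x) = 0"
    by (simp add: SK)
  have C5: "asymp_equiv2 (\<lambda>j. d j * \<sigma> j) (\<lambda>j. real (Suc j) powr (- (q + 1 + \<epsilon> - p) / 2))"
    unfolding asymp_equiv2_def
    using clo chi c12(1,2) by (intro exI[of _ "sqrt c1"] exI[of _ "sqrt c2"]) (auto simp: c_def \<beta>_def)
  have C8: "q / (q + 1 + \<epsilon> - p) * \<nu> > \<nu>"
  proof -
    have "q / \<beta> > 1" using \<beta>pos \<epsilon>_lt unfolding \<beta>_def by (simp add: field_simps)
    from mult_strict_right_mono[OF this \<nu>_pos] show ?thesis unfolding \<beta>_def by simp
  qed
  define Z where "Z j \<omega> = ((Y1 \<omega> - K xhat) \<bullet> u j)\<^sup>2" for j \<omega>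
  obtain C1 C2 where C12: "C1 > 0" "C2 > 0"
    "\<And>j. C1 * real (Suc j) powr (- p) \<le> (\<integral>\<omega>. Z j \<omega> \<partial>M)"
    "\<And>j. (\<integral>\<omega>. Z j \<omega> \<partial>M) \<le> C2 * real (Suc j) powr (- p)"
    using Y1_var unfolding asymp_equiv2_def Z_def by blast
  have intZ: "integrable M (Z j)" for j
  proof (rule ccontr)
    assume "\<not> integrable M (Z j)"
    then have "(\<integral>\<omega>. Z j \<omega> \<partial>M) = 0" by (rule not_integrable_integral_eq)
    moreover have "C1 * real (Suc j) powr (- p) > 0" using C12(1) by simp
    ultimately show False using C12(3)[of j] by simp
  qed
  have d2: "(d j)\<^sup>2 = real (Suc j) powr (p - 1 - \<epsilon>)" for j
    unfolding d_def using sq_pow[of j "p - 1 - \<epsilon>"] by simp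
  define g where "g j = (d j)\<^sup>2 * (\<integral>\<omega>. Z j \<omega> \<partial>M)" for j
  have g0: "g j \<ge> 0" for j
  proof -
    have "(\<integral>\<omega>. Z j \<omega> \<partial>M) \<ge> 0" unfolding Z_def by (rule integral_nonneg_AE) simp
    then show ?thesis unfolding g_def by simp
  qed
  have gle: "g j \<le> C2 * real (Suc j) powr (- 1 - \<epsilon>)" for j
  proof -
    have "g j \<le> (d j)\<^sup>2 * (C2 * real (Suc j) powr (- p))"
      unfolding g_def by (rule mult_left_mono[OF C12(4)]) simp
    also have "\<dots> = C2 * (real (Suc j) powr (p - 1 - \<epsilon>) * real (Suc j) powr (- p))"
      by (simp add: d2)
    also have "\<dots> = C2 * real (Suc j) powr (- 1 - \<epsilon>)"
      by (simp add: powr_add[symmetric])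
    finally show ?thesis .
  qed
  have gsum: "summable g"
  proof (rule summable_comparison_test[OF _ summable_mult[of "\<lambda>j. real (Suc j) powr (- 1 - \<epsilon>)" C2]])
    show "\<exists>N. \<forall>n\<ge>N. norm (g n) \<le> C2 * real (Suc n) powr (- 1 - \<epsilon>)" using g0 gle by auto
    have "summable (\<lambda>n. real n powr (- 1 - \<epsilon>))" using \<epsilon>_pos by (simp add: summable_real_powr_iff)
    then show "summable (\<lambda>j. real (Suc j) powr (- 1 - \<epsilon>))"
      using summable_Suc_iff[of "\<lambda>n. real n powr (- 1 - \<epsilon>)"] by simp
  qed
  define W where "W \<omega> = (\<Sum>j. ennreal ((d j)\<^sup>2 * Z j \<omega>))" for \<omega>
  have measZ: "(\<lambda>\<omega>. ennreal ((d j)\<^sup>2 * Z j \<omega>)) \<in> borel_measurable M" for j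
    using borel_measurable_integrable[OF intZ[of j]] by measurable
  have nnj: "(\<integral>\<^sup>+\<omega>. ennreal ((d j)\<^sup>2 * Z j \<omega>) \<partial>M) = ennreal (g j)" for j
  proof -
    have "integrable M (\<lambda>\<omega>. (d j)\<^sup>2 * Z j \<omega>)" using intZ[of j] by simp
    then have "(\<integral>\<^sup>+\<omega>. ennreal ((d j)\<^sup>2 * Z j \<omega>) \<partial>M) = ennreal (\<integral>\<omega>. (d j)\<^sup>2 * Z j \<omega> \<partial>M)"
      by (rule nn_integral_eq_integral) (simp add: Z_def)
    then show ?thesis unfolding g_def by simp
  qed
  have Wint: "(\<integral>\<^sup>+\<omega>. W \<omega> \<partial>M) = ennreal (\<Sum>j. g j)"
  proof -
    have "(\<integral>\<^sup>+\<omega>. W \<omega> \<partial>M) = (\<Sum>j. \<integral>\<^sup>+\<omega>. ennreal ((d j)\<^sup>2 * Z j \<omega>) \<partial>M)"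
      unfolding W_def by (rule nn_integral_suminf[OF measZ])
    also have "\<dots> = (\<Sum>j. ennreal (g j))" by (simp only: nnj)
    also have "\<dots> = ennreal (\<Sum>j. g j)" by (rule suminf_ennreal2[OF g0 gsum])
    finally show ?thesis .
  qed
  have Wfin: "(\<integral>\<^sup>+\<omega>. W \<omega> \<partial>M) < \<infinity>" unfolding Wint by simp
  have measW: "W \<in> borel_measurable M" unfolding W_def using borel_measurable_suminf_order[where f="\<lambda>j \<omega>. ennreal ((d j)\<^sup>2 * Z j \<omega>)", OF measZ] by simp
  have AEW: "AE \<omega> in M. W \<omega> \<noteq> \<infinity>" using nn_integral_PInf_AE[OF measW] Wfin by simp
  have Zsum: "AE \<omega> in M. summable (\<lambda>j. (d j)\<^sup>2 * Z j \<omega>)"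
    using AEW
  proof (rule eventually_mono)
    fix \<omega> assume "W \<omega> \<noteq> \<infinity>"
    then show "summable (\<lambda>j. (d j)\<^sup>2 * Z j \<omega>)"
      unfolding W_def by (intro summable_suminf_not_top) (auto simp: Z_def)
  qed
  have Kdom: "summable (\<lambda>j. (d j * (K xhat \<bullet> u j))\<^sup>2)" using C1 unfolding diag_dom_def by simp
  have dom_of: "summable (\<lambda>j. (d j * (Y1 \<omega> \<bullet> u j))\<^sup>2)" if zs: "summable (\<lambda>j. (d j)\<^sup>2 * Z j \<omega>)" for \<omega>
  proof (rule summable_comparison_test[OF _ summable_add[OF summable_mult[OF zs, of 2] summable_mult[OF Kdom, of 2]]])
    show "\<exists>N. \<forall>n\<ge>N. norm ((d n * (Y1 \<omega> \<bullet> u n))\<^sup>2) \<le> 2 * ((d n)\<^sup>2 * Z n \<omega>) + 2 * (d n * (K xhat \<bullet> u n))\<^sup>2"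
    proof (intro exI allI impI)
      fix n
      define A where "A = d n * ((Y1 \<omega> - K xhat) \<bullet> u n)"
      define B where "B = d n * (K xhat \<bullet> u n)"
      have "d n * (Y1 \<omega> \<bullet> u n) = A + B" unfolding A_def B_def by (simp add: inner_diff_left algebra_simps)
      moreover have "(A + B)\<^sup>2 \<le> 2 * A\<^sup>2 + 2 * B\<^sup>2"
        using zero_le_square[of "A - B"] by (simp add: power2_eq_square algebra_simps)
      moreover have "A\<^sup>2 = (d n)\<^sup>2 * Z n \<omega>" unfolding A_def Z_def by (simp add: power_mult_distrib)
      ultimately show "norm ((d n * (Y1 \<omega> \<bullet> u n))\<^sup>2) \<le> 2 * ((d n)\<^sup>2 * Z n \<omega>) + 2 * (d n * (K xhat \<bullet> u n))\<^sup>2"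
        unfolding B_def by simp
    qed
  qed
  have C6: "AE \<omega> in M. Y1 \<omega> \<in> diag_dom d u"
    using Zsum by (rule eventually_mono) (simp add: diag_dom_def dom_of)
  have eqAE: "AE \<omega> in M. ennreal ((norm (diag_op d u (Y1 \<omega>) - diag_op d u (K xhat)))\<^sup>2) = W \<omega>"
    using Zsum
  proof (rule eventually_mono)
    fix \<omega> assume zs: "summable (\<lambda>j. (d j)\<^sup>2 * Z j \<omega>)"
    have s1: "summable (\<lambda>j. (d j * (Y1 \<omega> \<bullet> u j)) *\<^sub>R u j)" by (rule on_series(1)[OF uon dom_of[OF zs]])
    have s2: "summable (\<lambda>j. (d j * (K xhat \<bullet> u j)) *\<^sub>R u j)" by (rule on_series(1)[OF uon Kdom])
    have sq: "summable (\<lambda>j. (d j * ((Y1 \<omega> - K xhat) \<bullet> u j))\<^sup>2)"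
      using zs by (simp add: Z_def power_mult_distrib)
    have "diag_op d u (Y1 \<omega>) - diag_op d u (K xhat)
        = (\<Sum>j. (d j * (Y1 \<omega> \<bullet> u j)) *\<^sub>R u j - (d j * (K xhat \<bullet> u j)) *\<^sub>R u j)"
      unfolding diag_op_def by (rule suminf_diff[OF s1 s2])
    also have "\<dots> = (\<Sum>j. (d j * ((Y1 \<omega> - K xhat) \<bullet> u j)) *\<^sub>R u j)"
      by (simp add: inner_diff_left algebra_simps)
    finally have "(norm (diag_op d u (Y1 \<omega>) - diag_op d u (K xhat)))\<^sup>2 = (\<Sum>j. (d j * ((Y1 \<omega> - K xhat) \<bullet> u j))\<^sup>2)"
      using on_series(3)[OF uon sq] by simp
    also have "\<dots> = (\<Sum>j. (d j)\<^sup>2 * Z j \<omega>)" by (simp add: Z_def power_mult_distrib)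
    finally have nq: "(norm (diag_op d u (Y1 \<omega>) - diag_op d u (K xhat)))\<^sup>2 = (\<Sum>j. (d j)\<^sup>2 * Z j \<omega>)" .
    have Z0: "\<And>j. 0 \<le> (d j)\<^sup>2 * Z j \<omega>" by (simp add: Z_def)
    have "W \<omega> = ennreal (\<Sum>j. (d j)\<^sup>2 * Z j \<omega>)" unfolding W_def by (rule suminf_ennreal2[OF Z0 zs])
    then show "ennreal ((norm (diag_op d u (Y1 \<omega>) - diag_op d u (K xhat)))\<^sup>2) = W \<omega>"
      by (simp only: nq)
  qed
  have C7: "(\<integral>\<^sup>+\<omega>. ennreal ((norm (diag_op d u (Y1 \<omega>) - diag_op d u (K xhat)))\<^sup>2) \<partial>M) < \<infinity>"
    using nn_integral_cong_AE[OF eqAE] Wfin by simp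
  have C9: "\<exists>c>0. \<forall>\<rho>>0. \<forall>x \<in> source_set \<sigma> v \<nu> \<rho>.
                 x \<in> source_set (\<lambda>j. d j * \<sigma> j) v (q / (q + 1 + \<epsilon> - p) * \<nu>) (c * \<rho>)"
  proof -
    define \<nu>' where "\<nu>' = q / \<beta> * \<nu>"
    have \<nu>'pos: "\<nu>' > 0" unfolding \<nu>'_def using \<beta>pos \<nu>_pos q_gt p_gt by simp
    define R where "R = sqrt c2 powr \<nu> / sqrt c1 powr \<nu>'"
    have Rpos: "R > 0" unfolding R_def using c12(1,2) by simp
    define r where "r j = \<sigma> j powr \<nu> / c j powr \<nu>'" for j
    have r0: "r j \<ge> 0" for j unfolding r_def by simp
    have rR: "r j \<le> R" for j
    proof -
      define n where "n = real (Suc j)"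
      have npos: "n > 0" unfolding n_def by simp
      define E where "E = n powr (- q / 2 * \<nu>)"
      have Epos: "E > 0" unfolding E_def using npos by simp
      have up: "\<sigma> j powr \<nu> \<le> sqrt c2 powr \<nu> * E"
      proof -
        have "\<sigma> j powr \<nu> \<le> (sqrt c2 * n powr (- q / 2)) powr \<nu>"
          using powr_mono2[OF less_imp_le[OF \<nu>_pos] less_imp_le[OF \<sigma>_pos[of j]] \<sigma>hi[of j]] by (simp add: n_def)
        also have "\<dots> = sqrt c2 powr \<nu> * E"
          unfolding E_def using c12(2) npos by (simp add: powr_mult powr_powr)
        finally show ?thesis .
      qed
      have lo: "sqrt c1 powr \<nu>' * E \<le> c j powr \<nu>'"
      proof -
        have ex: "- \<beta> / 2 * \<nu>' = - q / 2 * \<nu>" unfolding \<nu>'_def using \<beta>pos by (simp add: field_simps)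
        have "sqrt c1 powr \<nu>' * E = (sqrt c1 * n powr (- \<beta> / 2)) powr \<nu>'"
          unfolding E_def using c12(1) npos ex by (simp add: powr_mult powr_powr)
        also have "\<dots> \<le> c j powr \<nu>'"
          using powr_mono2[OF less_imp_le[OF \<nu>'pos] _ clo[of j]] c12(1) npos by (simp add: n_def)
        finally show ?thesis .
      qed
      have "r j \<le> (sqrt c2 powr \<nu> * E) / (sqrt c1 powr \<nu>' * E)"
        unfolding r_def by (rule frac_le[OF _ up _ lo]) (use c12 Epos in auto)
      also have "\<dots> = R" unfolding R_def using Epos by simp
      finally show ?thesis .
    qed
    have rel: "c j powr \<nu>' * r j = \<sigma> j powr \<nu>" for j
      unfolding r_def using cpos[of j] by simp
    show ?thesis
    proof (intro exI[of _ R] conjI allI impI ballI)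
      show "R > 0" by (rule Rpos)
      fix \<rho> :: real and x assume \<rho>: "\<rho> > 0" and x: "x \<in> source_set \<sigma> v \<nu> \<rho>"
      then obtain \<xi> where \<xi>: "norm \<xi> \<le> \<rho>" "x = (\<Sum>j. (\<sigma> j powr \<nu> * (\<xi> \<bullet> v j)) *\<^sub>R v j)"
        unfolding source_set_def by auto
      define a where "a j = r j * (\<xi> \<bullet> v j)" for j
      have ale: "(a j)\<^sup>2 \<le> R\<^sup>2 * (\<xi> \<bullet> v j)\<^sup>2" for j
      proof -
        have "(r j)\<^sup>2 \<le> R\<^sup>2" using power_mono[OF rR[of j] r0[of j], of 2] by simp
        then show ?thesis unfolding a_def by (simp add: power_mult_distrib mult_right_mono)
      qed
      have asum: "summable (\<lambda>j. (a j)\<^sup>2)"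
        by (rule summable_comparison_test[OF _ summable_mult[OF bessel(1)[OF von, of \<xi>], of "R\<^sup>2"]])
           (use ale in auto)
      define \<xi>' where "\<xi>' = (\<Sum>j. a j *\<^sub>R v j)"
      have \<xi>'v: "\<xi>' \<bullet> v j = a j" for j unfolding \<xi>'_def by (rule on_series(2)[OF von asum])
      have "(norm \<xi>')\<^sup>2 = (\<Sum>j. (a j)\<^sup>2)" unfolding \<xi>'_def by (rule on_series(3)[OF von asum])
      also have "\<dots> \<le> (\<Sum>j. R\<^sup>2 * (\<xi> \<bullet> v j)\<^sup>2)"
        by (rule suminf_le[OF ale asum summable_mult[OF bessel(1)[OF von]]])
      also have "\<dots> = R\<^sup>2 * (\<Sum>j. (\<xi> \<bullet> v j)\<^sup>2)" by (rule suminf_mult[OF bessel(1)[OF von]])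
      also have "\<dots> \<le> R\<^sup>2 * (norm \<xi>)\<^sup>2" by (rule mult_left_mono[OF bessel(2)[OF von]]) simp
      also have "\<dots> \<le> R\<^sup>2 * \<rho>\<^sup>2" using \<xi>(1) power_mono[OF \<xi>(1), of 2] by (intro mult_left_mono) auto
      also have "\<dots> = (R * \<rho>)\<^sup>2" by (simp add: power_mult_distrib)
      finally have n\<xi>': "norm \<xi>' \<le> R * \<rho>" using power2_le_imp_le Rpos \<rho> by simp
      have terms: "(\<lambda>j. ((d j * \<sigma> j) powr (q / (q + 1 + \<epsilon> - p) * \<nu>) * (\<xi>' \<bullet> v j)) *\<^sub>R v j)
                 = (\<lambda>j. (\<sigma> j powr \<nu> * (\<xi> \<bullet> v j)) *\<^sub>R v j)"
      proof
        fix j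
        have "(d j * \<sigma> j) powr (q / (q + 1 + \<epsilon> - p) * \<nu>) * (\<xi>' \<bullet> v j) = c j powr \<nu>' * r j * (\<xi> \<bullet> v j)"
          unfolding \<xi>'v a_def c_def \<nu>'_def \<beta>_def by simp
        also have "\<dots> = \<sigma> j powr \<nu> * (\<xi> \<bullet> v j)" using rel[of j] by simp
        finally show "((d j * \<sigma> j) powr (q / (q + 1 + \<epsilon> - p) * \<nu>) * (\<xi>' \<bullet> v j)) *\<^sub>R v j
                 = (\<sigma> j powr \<nu> * (\<xi> \<bullet> v j)) *\<^sub>R v j" by simp
      qed
      show "x \<in> source_set (\<lambda>j. d j * \<sigma> j) v (q / (q + 1 + \<epsilon> - p) * \<nu>) (R * \<rho>)"
        unfolding source_set_def using n\<xi>' \<xi>(2) terms by auto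
    qed
  qed
  show ?thesis
    unfolding d_def[symmetric] Let_def using C1 C2 C3 C4 C5 C6 C7 C8 C9 by blast
qed

end
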